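(* Let $\varphi:\mathbb{R}^n\to[0,\infty]$ be a geometric convex function. Then for all $s,t>0$, \[ \left(\underline{K}_{1/s}(\varphi)\right)^{\circ}\subseteq\underline{K}_{s}(\varphi^{\circ})\subseteq(st+1)\left(\underline{K}_{t}(\varphi)\right)^{\circ}. \]
   Context: A geometric convex function is a lower semi-continuous convex function $\varphi:\mathbb{R}^n\to[0,\infty]$ with $\varphi(0)=0$. The polarity transform is $\varphi^{\circ}(x)=\sup_{y\in\mathbb{R}^n}\frac{\langle x,y\rangle-1}{\varphi(y)}$, with conventions $\frac{+}{0}=\infty$, $\frac{0}{0}=0$, $\frac{-}{0}=0$. For $t\ge0$, $\underline{K}_t(\varphi)=\{x\in\mathbb{R}^n:\varphi(x)\le t\}$. For a set $A\subseteq\mathbb{R}^n$, $A^{\circ}=\{x:\sup_{y\in A}\langle x,y\rangle\le1\}$. *)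

theory Defs
  imports "HOL-Analysis.Analysis" "HOL-Library.Extended_Real"
begin

text \<open>Functions R^n -> [0,infinity] are modelled as maps into ereal that are nonnegative.\<close>

definition lsc_fun :: "('a::topological_space \<Rightarrow> ereal) \<Rightarrow> bool" where
  "lsc_fun f \<longleftrightarrow> (\<forall>x. f x \<le> Liminf (at x) f)"

definition convex_efun :: "('a::real_vector \<Rightarrow> ereal) \<Rightarrow> bool" where
  "convex_efun f \<longleftrightarrow> (\<forall>x y (l::real). 0 \<le> l \<and> l \<le> 1 \<longrightarrow>
      f ((1 - l) *\<^sub>R x + l *\<^sub>R y) \<le> ereal (1 - l) * f x + ereal l * f y)"

definition geometric_convex :: "('a::euclidean_space \<Rightarrow> ereal) \<Rightarrow> bool" where
  "geometric_convex f \<longleftrightarrow> (\<forall>x. 0 \<le> f x) \<and> lsc_fun f \<and> convex_efun f \<and> f 0 = 0"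

text \<open>Quotient a / b for a real, b in [0,infinity], with conventions
  (+)/0 = infinity, 0/0 = 0, (-)/0 = 0, and a/infinity = 0.\<close>
definition pquot :: "real \<Rightarrow> ereal \<Rightarrow> ereal" where
  "pquot a b = (if b = 0 then (if a > 0 then \<infinity> else 0)
                else if b = \<infinity> then 0 else ereal (a / real_of_ereal b))"

definition polarity :: "('a::euclidean_space \<Rightarrow> ereal) \<Rightarrow> 'a \<Rightarrow> ereal" where
  "polarity f x = (SUP y. pquot (inner x y - 1) (f y))"

definition sublevel :: "('a \<Rightarrow> ereal) \<Rightarrow> real \<Rightarrow> 'a set" where
  "sublevel f t = {x. f x \<le> ereal t}"

definition polar_set :: "'a::real_inner set \<Rightarrow> 'a set" where
  "polar_set A = {x. \<forall>y\<in>A. inner x y \<le> 1}"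

end

theory Submission
  imports Defs
begin

lemma pol_le:
  fixes \<phi> :: "'a::euclidean_space \<Rightarrow> ereal"
  shows "polarity \<phi> x \<le> ereal s \<longleftrightarrow> (\<forall>y. pquot (inner x y - 1) (\<phi> y) \<le> ereal s)"
  unfolding polarity_def by (simp add: SUP_le_iff)

theorem proposition2:
  fixes \<phi> :: "'a::euclidean_space \<Rightarrow> ereal" and s t :: real
  assumes "geometric_convex \<phi>" and "s > 0" and "t > 0"
  shows "polar_set (sublevel \<phi> (1 / s)) \<subseteq> sublevel (polarity \<phi>) s
         \<and> sublevel (polarity \<phi>) s \<subseteq> (\<lambda>x. (s * t + 1) *\<^sub>R x) ` polar_set (sublevel \<phi> t)"
proof
  have nn: "\<And>y. 0 \<le> \<phi> y" and cv: "convex_efun \<phi>" and z: "\<phi> 0 = 0"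
    using assms(1) unfolding geometric_convex_def by auto
  have sc: "\<phi> (l *\<^sub>R y) \<le> ereal l * \<phi> y" if "0 \<le> l" "l \<le> 1" for l y
    using cv[unfolded convex_efun_def, rule_format, of l 0 y] that z by simp
  show "polar_set (sublevel \<phi> (1 / s)) \<subseteq> sublevel (polarity \<phi>) s"
  proof
    fix x assume "x \<in> polar_set (sublevel \<phi> (1 / s))"
    hence px: "\<And>y. \<phi> y \<le> ereal (1/s) \<Longrightarrow> inner x y \<le> 1"
      unfolding polar_set_def sublevel_def by auto
    have "pquot (inner x y - 1) (\<phi> y) \<le> ereal s" for y
    proof (cases "\<phi> y = 0")
      case True
      then have "inner x y \<le> 1" using px[of y] assms(2) by simp
      then show ?thesis using True assms(2) by (simp add: pquot_def)
    next
      case F: False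
      show ?thesis
      proof (cases "\<phi> y = \<infinity>")
        case True then show ?thesis using F assms(2) by (simp add: pquot_def)
      next
        case False
        then obtain c where c: "\<phi> y = ereal c" using nn[of y] by (cases "\<phi> y") auto
        with F nn[of y] have c0: "c > 0" by auto
        have "(inner x y - 1) / c \<le> s"
        proof (cases "s * c < 1")
          case True
          then have "c \<le> 1/s" using assms(2) by (simp add: field_simps)
          then have "inner x y \<le> 1" using px[of y] c by simp
          then show ?thesis using c0 assms(2)
            by (smt (verit) divide_nonpos_pos)
        next
          case False
          define l where "l = 1/(s*c)"
          have l0: "0 \<le> l" "l \<le> 1" using False c0 assms(2) by (auto simp: l_def field_simps)
          have "\<phi> (l *\<^sub>R y) \<le> ereal l * ereal c" using sc[OF l0, of y] c by simp
          also have "\<dots> = ereal (1/s)" using c0 by (simp add: l_def)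
          finally have "inner x (l *\<^sub>R y) \<le> 1" by (rule px)
          hence "l * inner x y \<le> 1" by simp
          hence "inner x y \<le> s * c" using c0 assms(2) by (simp add: l_def field_simps)
          hence "inner x y - 1 \<le> s * c" by simp
          thus ?thesis using c0 by (simp add: field_simps)
        qed
        then show ?thesis using c F by (simp add: pquot_def)
      qed
    qed
    then show "x \<in> sublevel (polarity \<phi>) s" unfolding sublevel_def by (simp add: pol_le)
  qed
  show "sublevel (polarity \<phi>) s \<subseteq> (\<lambda>x. (s * t + 1) *\<^sub>R x) ` polar_set (sublevel \<phi> t)"
  proof
    fix x assume "x \<in> sublevel (polarity \<phi>) s"
    hence q: "\<And>y. pquot (inner x y - 1) (\<phi> y) \<le> ereal s"
      unfolding sublevel_def by (simp add: pol_le)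
    have st: "s * t + 1 > 0" using assms(2,3) by (simp add: add_pos_pos)
    have "inner x y \<le> s * t + 1" if yt: "\<phi> y \<le> ereal t" for y
    proof (cases "\<phi> y = 0")
      case True
      then have "\<not> inner x y - 1 > 0" using q[of y] by (auto simp: pquot_def)
      then show ?thesis using assms by (smt (verit) mult_pos_pos)
    next
      case False
      then obtain c where c: "\<phi> y = ereal c" using yt nn[of y] by (cases "\<phi> y") (auto simp: ereal_less_eq)
      with False nn[of y] yt have c0: "c > 0" "c \<le> t" by auto
      have "(inner x y - 1) / c \<le> s" using q[of y] c c0 by (simp add: pquot_def)
      hence "inner x y - 1 \<le> s * c" using c0 by (simp add: field_simps)
      moreover have "s * c \<le> s * t" using c0 assms by simp
      ultimately show ?thesis by simp
    qed
    hence "inverse (s*t+1) *\<^sub>R x \<in> polar_set (sublevel \<phi> t)"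
      using st unfolding polar_set_def sublevel_def by (auto simp: field_simps)
    moreover have "x = (s * t + 1) *\<^sub>R (inverse (s*t+1) *\<^sub>R x)" using st by simp
    ultimately show "x \<in> (\<lambda>x. (s * t + 1) *\<^sub>R x) ` polar_set (sublevel \<phi> t)" by blast
  qed
qed

end
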